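(* Let $X\subseteq 2^\omega$ be such that for all distinct $x,y\in X$ the set $\{n: x(n)\neq y(n)\}$ is infinite, and let $Y\subseteq X$. Let $N$ be a model of ZFC containing $X$ and $Y$, and let $G$ be $\mathbb{Q}(X,Y)$-generic over $N$. For $n<\omega$ put $U_n^G=\bigcup\{[s]: \exists r\in G\ (n,s)\in r\}$. Then $X\cap\bigcap_{n<\omega}U_n^G = X\setminus Y$.
   Context: For $s\in 2^{<\omega}$, $[s]=\{y\in 2^\omega: s\subseteq y\}$ and $|s|$ is the length of $s$. For $x\in 2^\omega$, $s\in 2^{<\omega}$, $k<\omega$, define $\mathrm{swap}(x,s,k)=\{y\in 2^\omega: s\subseteq y,\ |\{i\geq |s|: y(i)\neq x(i)\}|\leq k\}$. The poset $\mathbb{Q}(X,Y)$ consists of all finite sets $r$ of elements of the form $(n,s)$ with $n<\omega$, $s\in 2^{<\omega}$, or of the form $(n,(x,t,k))$ with $x\in Y$, $t\in 2^{<\omega}$, $n,k<\omega$, subject to the condition: whenever $(n,s)\in r$ and $(n,(x,t,k))\in r$ (same $n$), then $[s]\cap\mathrm{swap}(x,t,k)=\emptyset$. The ordering is reverse inclusion: $r_1\le r_2$ iff $r_1\supseteq r_2$. *)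

theory Defs
  imports Main
begin

type_synonym cantor = "nat \<Rightarrow> bool"
type_synonym fseq = "bool list"

definition cyl :: "fseq \<Rightarrow> cantor set" where
  "cyl s = {y. \<forall>i<length s. y i = s ! i}"

definition swap :: "cantor \<Rightarrow> fseq \<Rightarrow> nat \<Rightarrow> cantor set" where
  "swap x s k = {y. y \<in> cyl s \<and> finite {i. length s \<le> i \<and> y i \<noteq> x i}
                   \<and> card {i. length s \<le> i \<and> y i \<noteq> x i} \<le> k}"

text \<open>Elements of conditions: (n, Inl s) stands for (n,s);
  (n, Inr (x,t,k)) stands for (n,(x,t,k)).\<close>
type_synonym qelem = "nat \<times> (fseq + (cantor \<times> fseq \<times> nat))"

definition Qposet :: "cantor set \<Rightarrow> cantor set \<Rightarrow> qelem set set" where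
  "Qposet X Y = {r. finite r
      \<and> (\<forall>n x t k. (n, Inr (x, t, k)) \<in> r \<longrightarrow> x \<in> Y)
      \<and> (\<forall>n s x t k. (n, Inl s) \<in> r \<longrightarrow> (n, Inr (x, t, k)) \<in> r
                     \<longrightarrow> cyl s \<inter> swap x t k = {})}"

definition qle :: "qelem set \<Rightarrow> qelem set \<Rightarrow> bool" where
  "qle r1 r2 \<longleftrightarrow> r2 \<subseteq> r1"

definition dense_in :: "qelem set set \<Rightarrow> qelem set set \<Rightarrow> bool" where
  "dense_in P D \<longleftrightarrow> D \<subseteq> P \<and> (\<forall>p\<in>P. \<exists>q\<in>D. qle q p)"

definition filter_in :: "qelem set set \<Rightarrow> qelem set set \<Rightarrow> bool" where
  "filter_in P G \<longleftrightarrow> G \<subseteq> P \<and> G \<noteq> {}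
     \<and> (\<forall>p\<in>G. \<forall>q\<in>P. qle p q \<longrightarrow> q \<in> G)
     \<and> (\<forall>p\<in>G. \<forall>q\<in>G. \<exists>r\<in>G. qle r p \<and> qle r q)"

text \<open>G is generic for the family \<N> of sets of conditions (the subsets of
  the poset that belong to the ground model N): G is a filter meeting every
  dense set in \<N>.\<close>
definition generic_over :: "qelem set set set \<Rightarrow> qelem set set \<Rightarrow> qelem set set \<Rightarrow> bool" where
  "generic_over \<N> P G \<longleftrightarrow> filter_in P G \<and> (\<forall>D\<in>\<N>. dense_in P D \<longrightarrow> G \<inter> D \<noteq> {})"

definition UG :: "qelem set set \<Rightarrow> nat \<Rightarrow> cantor set" where
  "UG G n = \<Union> {cyl s | s. \<exists>r\<in>G. (n, Inl s) \<in> r}"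

text \<open>Subsets of the poset definable in N from the parameters X, Y, x, n
  (used to render "N is a model of ZFC containing X and Y").\<close>
definition Dx :: "cantor set \<Rightarrow> cantor set \<Rightarrow> cantor \<Rightarrow> nat \<Rightarrow> qelem set set" where
  "Dx X Y x n = {r \<in> Qposet X Y. \<exists>s. x \<in> cyl s \<and> (n, Inl s) \<in> r}"

definition Ey :: "cantor set \<Rightarrow> cantor set \<Rightarrow> cantor \<Rightarrow> qelem set set" where
  "Ey X Y y = {r \<in> Qposet X Y. \<exists>n. (n, Inr (y, [], 0)) \<in> r}"

end

theory Submission
  imports Defs
begin

lemma big_diff:
  fixes x y :: cantor
  assumes "infinite {n. x n \<noteq> y n}"
  shows "\<exists>m. length t \<le> m \<and> k < card {i. length t \<le> i \<and> i < m \<and> x i \<noteq> y i}"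
proof -
  have "infinite ({n. x n \<noteq> y n} - {..<length t})" using assms by simp
  then obtain F where F: "F \<subseteq> {n. x n \<noteq> y n} - {..<length t}" "finite F" "card F = Suc k"
    using infinite_arbitrarily_large by blast
  define m where "m = Suc (Max (F \<union> {length t}))"
  have "F \<subseteq> {i. length t \<le> i \<and> i < m \<and> x i \<noteq> y i}"
    using F unfolding m_def by (auto simp: le_imp_less_Suc)
  then have "card F \<le> card {i. length t \<le> i \<and> i < m \<and> x i \<noteq> y i}"
    by (intro card_mono) auto
  moreover have "length t \<le> m" unfolding m_def using F(2) by (simp add: le_SucI)
  ultimately show ?thesis using F by (intro exI[of _ m]) auto
qed

lemma sep:
  fixes x y :: cantor
  assumes "infinite {n. x n \<noteq> y n}"
  shows "\<exists>m. \<forall>M\<ge>m. cyl (map x [0..<M]) \<inter> swap y t k = {}"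
proof -
  obtain m where m: "length t \<le> m" "k < card {i. length t \<le> i \<and> i < m \<and> x i \<noteq> y i}"
    using big_diff[OF assms] by blast
  show ?thesis
  proof (intro exI allI impI)
    fix M assume "m \<le> M"
    show "cyl (map x [0..<M]) \<inter> swap y t k = {}"
    proof (rule ccontr)
      assume "cyl (map x [0..<M]) \<inter> swap y t k \<noteq> {}"
      then obtain z where z: "z \<in> cyl (map x [0..<M])" "z \<in> swap y t k" by blast
      have zx: "\<And>i. i < M \<Longrightarrow> z i = x i" using z(1) by (auto simp: cyl_def)
      have fin: "finite {i. length t \<le> i \<and> z i \<noteq> y i}" and ck: "card {i. length t \<le> i \<and> z i \<noteq> y i} \<le> k"
        using z(2) by (auto simp: swap_def)
      have "{i. length t \<le> i \<and> i < m \<and> x i \<noteq> y i} \<subseteq> {i. length t \<le> i \<and> z i \<noteq> y i}"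
        using zx \<open>m \<le> M\<close> by auto
      then have "card {i. length t \<le> i \<and> i < m \<and> x i \<noteq> y i} \<le> card {i. length t \<le> i \<and> z i \<noteq> y i}"
        using fin by (rule card_mono[rotated])
      then show False using m ck by simp
    qed
  qed
qed

lemma fin_max:
  fixes P :: "'a \<Rightarrow> nat \<Rightarrow> bool"
  assumes "finite R" "\<forall>e\<in>R. \<exists>m. \<forall>M\<ge>m. P e M"
  shows "\<exists>m. \<forall>e\<in>R. \<forall>M\<ge>m. P e M"
  using assms
proof (induction R rule: finite_induct)
  case empty then show ?case by simp
next
  case (insert a R)
  then obtain m1 where m1: "\<forall>e\<in>R. \<forall>M\<ge>m1. P e M" by auto
  from insert obtain m2 where m2: "\<forall>M\<ge>m2. P a M" by auto
  have "\<forall>e\<in>insert a R. \<forall>M\<ge>max m1 m2. P e M"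
  proof (intro ballI allI impI)
    fix e M assume "e \<in> insert a R" "max m1 m2 \<le> M"
    moreover have "m1 \<le> M" "m2 \<le> M" using \<open>max m1 m2 \<le> M\<close> by simp_all
    ultimately show "P e M" using m1 m2 by blast
  qed
  then show ?case by blast
qed

lemma x_in_cyl: "x \<in> cyl (map x [0..<M])"
  by (simp add: cyl_def)

lemma Dx_dense:
  assumes "\<forall>x\<in>X. \<forall>y\<in>X. x \<noteq> y \<longrightarrow> infinite {n. x n \<noteq> y n}"
    and "Y \<subseteq> X" and "x \<in> X - Y"
  shows "dense_in (Qposet X Y) (Dx X Y x n)"
  unfolding dense_in_def
proof (intro conjI ballI)
  show "Dx X Y x n \<subseteq> Qposet X Y" by (auto simp: Dx_def)
next
  fix r assume r: "r \<in> Qposet X Y"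
  define R where "R = {(y,t,k). (n, Inr (y,t,k)) \<in> r}"
  have "R \<subseteq> (\<lambda>e. case snd e of Inr v \<Rightarrow> v) ` r"
    unfolding R_def by (force)
  moreover have "finite r" using r by (simp add: Qposet_def)
  ultimately have finR: "finite R" by (meson finite_imageI finite_subset)
  have "\<forall>e\<in>R. \<exists>m. \<forall>M\<ge>m. cyl (map x [0..<M]) \<inter> swap (fst e) (fst (snd e)) (snd (snd e)) = {}"
  proof
    fix e assume "e \<in> R"
    then obtain y t k where e: "e = (y,t,k)" "(n, Inr (y,t,k)) \<in> r" unfolding R_def by (cases e) auto
    then have "y \<in> Y" using r unfolding Qposet_def by blast
    then have "y \<noteq> x" "y \<in> X" using assms by auto
    then have "infinite {n. x n \<noteq> y n}" using assms by auto
    then show "\<exists>m. \<forall>M\<ge>m. cyl (map x [0..<M]) \<inter> swap (fst e) (fst (snd e)) (snd (snd e)) = {}"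
      using sep e by simp
  qed
  from fin_max[OF finR this] obtain m where
    m: "\<forall>e\<in>R. cyl (map x [0..<m]) \<inter> swap (fst e) (fst (snd e)) (snd (snd e)) = {}" by blast
  define q where "q = insert (n, Inl (map x [0..<m])) r"
  have "q \<in> Qposet X Y"
    using r m unfolding q_def Qposet_def R_def by auto
  then have "q \<in> Dx X Y x n" unfolding Dx_def q_def using x_in_cyl by blast
  moreover have "qle q r" unfolding qle_def q_def by auto
  ultimately show "\<exists>q\<in>Dx X Y x n. qle q r" by blast
qed

lemma Ey_dense:
  assumes "y \<in> Y"
  shows "dense_in (Qposet X Y) (Ey X Y y)"
  unfolding dense_in_def
proof (intro conjI ballI)
  show "Ey X Y y \<subseteq> Qposet X Y" by (auto simp: Ey_def)
next
  fix r assume r: "r \<in> Qposet X Y"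
  have "finite r" using r by (simp add: Qposet_def)
  then obtain n where n: "n \<notin> fst ` r"
    by (metis ex_new_if_finite finite_imageI infinite_UNIV_nat)
  define q where "q = insert (n, Inr (y, [], 0)) r"
  have "q \<in> Qposet X Y"
    using r n assms unfolding q_def Qposet_def by (auto simp: rev_image_eqI) blast
  then have "q \<in> Ey X Y y" unfolding Ey_def q_def by blast
  moreover have "qle q r" unfolding qle_def q_def by auto
  ultimately show "\<exists>q\<in>Ey X Y y. qle q r" by blast
qed

lemma self_swap: "y \<in> swap y [] 0"
  by (simp add: swap_def cyl_def)

theorem mainTheorem2:
  fixes X Y :: "cantor set"
    and \<N> :: "qelem set set set"
    and G :: "qelem set set"
  assumes "\<forall>x\<in>X. \<forall>y\<in>X. x \<noteq> y \<longrightarrow> infinite {n. x n \<noteq> y n}"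
    and "Y \<subseteq> X"
    and "\<forall>x\<in>X. \<forall>n. Dx X Y x n \<in> \<N>"
    and "\<forall>y\<in>Y. Ey X Y y \<in> \<N>"
    and "generic_over \<N> (Qposet X Y) G"
  shows "X \<inter> (\<Inter>n. UG G n) = X - Y"
proof
  show "X - Y \<subseteq> X \<inter> (\<Inter>n. UG G n)"
  proof
    fix x assume x: "x \<in> X - Y"
    have "x \<in> UG G n" for n
    proof -
      have "G \<inter> Dx X Y x n \<noteq> {}"
        using assms(5) assms(3) x Dx_dense[OF assms(1,2) x] unfolding generic_over_def by blast
      then obtain r s where "r \<in> G" "x \<in> cyl s" "(n, Inl s) \<in> r" unfolding Dx_def by blast
      then show ?thesis unfolding UG_def by blast
    qed
    then show "x \<in> X \<inter> (\<Inter>n. UG G n)" using x by auto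
  qed
next
  show "X \<inter> (\<Inter>n. UG G n) \<subseteq> X - Y"
  proof
    fix y assume y: "y \<in> X \<inter> (\<Inter>n. UG G n)"
    show "y \<in> X - Y"
    proof (rule ccontr)
      assume "y \<notin> X - Y"
      then have yY: "y \<in> Y" using y by auto
      have "G \<inter> Ey X Y y \<noteq> {}"
        using assms(5) assms(4) yY Ey_dense[OF yY] unfolding generic_over_def by blast
      then obtain r0 n where r0: "r0 \<in> G" "(n, Inr (y, [], 0)) \<in> r0" unfolding Ey_def by blast
      have "y \<in> UG G n" using y by auto
      then obtain r1 s where r1: "r1 \<in> G" "(n, Inl s) \<in> r1" "y \<in> cyl s" unfolding UG_def by blast
      obtain r2 where r2: "r2 \<in> G" "qle r2 r0" "qle r2 r1"
        using assms(5) r0(1) r1(1) unfolding generic_over_def filter_in_def by blast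
      have "r2 \<in> Qposet X Y" using r2(1) assms(5) unfolding generic_over_def filter_in_def by blast
      moreover have "(n, Inr (y, [], 0)) \<in> r2" "(n, Inl s) \<in> r2" using r0 r1 r2 unfolding qle_def by auto
      ultimately have "cyl s \<inter> swap y [] 0 = {}" unfolding Qposet_def by blast
      then show False using r1(3) self_swap by blast
    qed
  qed
qed

end
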